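(* Let $\mathcal{W}=\{W_1,\dots,W_N\}$ be a finite set of $d\times k$ real matrices and let $\mathcal{V}$ be a linear subspace of $\mathbb{S}^d$. Consider the semidefinite program in the variables $X\in\mathbb{S}^d$, $X_i,T_i\in\mathbb{S}^k$ ($i=1,\dots,N$): $$\text{maximize }\sum_{i=1}^N\operatorname{trace}T_i\ \text{ subject to } X\in\mathcal{V},\ X=\sum_{i=1}^NW_iX_iW_i^T,\ X_i\succeq T_i,\ I\succeq T_i\succeq 0\ (i=1,\dots,N).$$ If $(X,X_1,\dots,X_N,T_1,\dots,T_N)$ is any optimal solution of this program, then $\sum_{i=1}^N\operatorname{rank}X_i\ge\sum_{i=1}^N\operatorname{rank}X_i'$ for all $X_1',\dots,X_N'\in\mathbb{S}^k_+$ with $\sum_{i=1}^NW_iX_i'W_i^T\in\mathcal{V}$; that is, $X$ is obtained from a representation maximizing $\sum_i\operatorname{rank}X_i$ over $\mathcal{V}\cap\mathcal{C}(\mathcal{W})^*$.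
   Context: $\mathbb{S}^d$ denotes real symmetric $d\times d$ matrices; $A\succeq B$ means $A-B$ is positive semidefinite; $\mathbb{S}^k_+$ is the positive semidefinite cone. $\mathcal{C}(\mathcal{W})^*=\{\sum_{i=1}^NW_iX_iW_i^T: X_i\in\mathbb{S}^k_+\}$. Note that the constraints force $X_i\succeq 0$. *)

theory Defs
  imports "HOL-Analysis.Analysis"
begin

definition sym_mat :: "real^'n^'n \<Rightarrow> bool" where
  "sym_mat A \<longleftrightarrow> transpose A = A"

definition psd :: "real^'n^'n \<Rightarrow> bool" where
  "psd A \<longleftrightarrow> sym_mat A \<and> (\<forall>x. 0 \<le> x \<bullet> (A *v x))"

definition loewner_ge :: "real^'n^'n \<Rightarrow> real^'n^'n \<Rightarrow> bool" where
  "loewner_ge A B \<longleftrightarrow> psd (A - B)"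

definition cong_sum :: "nat \<Rightarrow> (nat \<Rightarrow> real^'k^'d) \<Rightarrow> (nat \<Rightarrow> real^'k^'k) \<Rightarrow> real^'d^'d" where
  "cong_sum N W Xs = (\<Sum>i<N. W i ** Xs i ** transpose (W i))"

definition sdp_feasible ::
  "nat \<Rightarrow> (nat \<Rightarrow> real^'k^'d) \<Rightarrow> (real^'d^'d) set \<Rightarrow>
   real^'d^'d \<Rightarrow> (nat \<Rightarrow> real^'k^'k) \<Rightarrow> (nat \<Rightarrow> real^'k^'k) \<Rightarrow> bool" where
  "sdp_feasible N W V X Xs Ts \<longleftrightarrow>
     sym_mat X \<and> (\<forall>i<N. sym_mat (Xs i) \<and> sym_mat (Ts i)) \<and>
     X \<in> V \<and> X = cong_sum N W Xs \<and>
     (\<forall>i<N. loewner_ge (Xs i) (Ts i) \<and> loewner_ge (mat 1) (Ts i) \<and> loewner_ge (Ts i) 0)"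

definition sdp_objective :: "nat \<Rightarrow> (nat \<Rightarrow> real^'k^'k) \<Rightarrow> real" where
  "sdp_objective N Ts = (\<Sum>i<N. trace (Ts i))"

definition sdp_optimal ::
  "nat \<Rightarrow> (nat \<Rightarrow> real^'k^'d) \<Rightarrow> (real^'d^'d) set \<Rightarrow>
   real^'d^'d \<Rightarrow> (nat \<Rightarrow> real^'k^'k) \<Rightarrow> (nat \<Rightarrow> real^'k^'k) \<Rightarrow> bool" where
  "sdp_optimal N W V X Xs Ts \<longleftrightarrow>
     sdp_feasible N W V X Xs Ts \<and>
     (\<forall>X' Xs' Ts'. sdp_feasible N W V X' Xs' Ts' \<longrightarrow>
        sdp_objective N Ts' \<le> sdp_objective N Ts)"

end

theory Submission
  imports Defs
begin

definition prj :: "(real^'n) set \<Rightarrow> real^'n^'n" where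
  "prj B = (\<chi> i j. \<Sum>b\<in>B. b$i * b$j)"

lemma prj_mult: "finite B \<Longrightarrow> prj B *v x = (\<Sum>b\<in>B. (b \<bullet> x) *\<^sub>R b)"
proof -
  assume f: "finite B"
  show ?thesis
  unfolding vec_eq_iff proof (intro allI)
    fix i
    have "(prj B *v x) $ i = (\<Sum>j\<in>UNIV. \<Sum>b\<in>B. b$i * b$j * x$j)"
      by (simp add: prj_def matrix_vector_mult_def sum_distrib_right)
    also have "\<dots> = (\<Sum>b\<in>B. \<Sum>j\<in>UNIV. b$i * b$j * x$j)" by (rule sum.swap)
    also have "\<dots> = (\<Sum>b\<in>B. (b \<bullet> x) * b$i)"
      by (simp add: inner_vec_def sum_distrib_left sum_distrib_right mult_ac)
    also have "\<dots> = (\<Sum>b\<in>B. (b \<bullet> x) *\<^sub>R b) $ i" by (simp add: sum_component)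
    finally show "(prj B *v x) $ i = (\<Sum>b\<in>B. (b \<bullet> x) *\<^sub>R b) $ i" .
  qed
qed

lemma prj_sym: "sym_mat (prj B)"
  by (simp add: sym_mat_def prj_def transpose_def vec_eq_iff mult.commute)

lemma prj_trace: "finite B \<Longrightarrow> (\<And>b. b\<in>B \<Longrightarrow> norm b = 1) \<Longrightarrow> trace (prj B) = real (card B)"
proof -
  assume f: "finite B" and n: "\<And>b. b\<in>B \<Longrightarrow> norm b = 1"
  have "trace (prj B) = (\<Sum>b\<in>B. b \<bullet> b)"
    unfolding trace_def prj_def by (simp add: inner_vec_def sum.swap[of _ UNIV] power2_eq_square)
  also have "\<dots> = (\<Sum>b\<in>B. 1)"
    using n by (intro sum.cong) (auto simp: norm_eq_1)
  finally show ?thesis by simp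
qed

lemma sym_inner: "sym_mat A \<Longrightarrow> x \<bullet> (A *v y) = (A *v x) \<bullet> y"
  by (metis dot_lmul_matrix sym_mat_def transpose_matrix_vector inner_commute)

lemma psd_zero:
  assumes "psd T" "z \<bullet> (T *v z) = 0" shows "T *v z = 0"
proof -
  have s: "sym_mat T" and q: "\<And>x. 0 \<le> x \<bullet> (T *v x)" using assms(1) by (auto simp: psd_def)
  define y where "y = T *v z"
  define m where "m = y \<bullet> y"
  define c where "c = y \<bullet> (T *v y)"
  have c0: "c \<ge> 0" using q c_def by auto
  have m0: "m \<ge> 0" by (simp add: m_def)
  define s' where "s' = m / (c+1)"
  have "0 \<le> (z - s' *\<^sub>R y) \<bullet> (T *v (z - s' *\<^sub>R y))" by (rule q)
  also have "\<dots> = z \<bullet> (T *v z) - 2 * s' * m + s'^2 * c"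
    using sym_inner[OF s, of y z]
    by (simp add: matrix_vector_mult_diff_distrib matrix_vector_mult_scaleR inner_diff_left inner_diff_right
       algebra_simps power2_eq_square m_def c_def y_def inner_commute)
  finally have ineq: "0 \<le> - 2 * s' * m + s'^2 * c" using assms(2) by simp
  have "m = 0"
  proof (rule ccontr)
    assume "m \<noteq> 0" hence mp: "m > 0" using m0 by simp
    hence sp: "s' > 0" using c0 by (simp add: s'_def)
    have "s' * c < m" using mp c0 by (simp add: s'_def field_simps)
    hence "s' * (s' * c) < s' * (2*m)" using sp mp by (intro mult_strict_left_mono) auto
    thus False using ineq by (simp add: power2_eq_square algebra_simps)
  qed
  thus ?thesis by (simp add: m_def y_def)
qed

lemma sym_diff: "sym_mat A \<Longrightarrow> sym_mat B \<Longrightarrow> sym_mat (A - B)"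
  by (simp add: sym_mat_def transpose_def vec_eq_iff)

lemma sym_scale: "sym_mat A \<Longrightarrow> sym_mat (t *\<^sub>R A)"
  by (simp add: sym_mat_def transpose_scalar)

lemma sym_one: "sym_mat (mat 1)" by (simp add: sym_mat_def)

lemma psd_form: "psd (A - B) \<Longrightarrow> x \<bullet> (B *v x) \<le> x \<bullet> (A *v x)"
  unfolding psd_def by (metis diff_ge_0_iff_ge inner_diff_right matrix_vector_mult_diff_rdistrib)

lemma prj_orth:
  assumes f: "finite B" and po: "pairwise orthogonal B" and n: "\<And>b. b\<in>B \<Longrightarrow> norm b = 1"
    and b: "b \<in> B"
  shows "b \<bullet> (x - prj B *v x) = 0"
proof -
  have "b \<bullet> (prj B *v x) = (\<Sum>c\<in>B. (c \<bullet> x) * (b \<bullet> c))"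
    by (simp add: prj_mult[OF f] inner_sum_right)
  also have "\<dots> = (b \<bullet> x) * (b \<bullet> b) + (\<Sum>c\<in>B-{b}. (c \<bullet> x) * (b \<bullet> c))"
    using f b by (simp add: sum.remove)
  also have "(\<Sum>c\<in>B-{b}. (c \<bullet> x) * (b \<bullet> c)) = 0"
    using po b by (intro sum.neutral) (auto simp: pairwise_def orthogonal_def)
  also have "b \<bullet> b = 1" using n[OF b] by (simp add: norm_eq_1)
  finally show ?thesis by (simp add: inner_diff_right)
qed

lemma prj_span: "finite B \<Longrightarrow> prj B *v x \<in> span B"
  by (simp add: prj_mult span_sum span_scale span_base)

lemma orth_span: "(\<And>b. b \<in> B \<Longrightarrow> b \<bullet> z = 0) \<Longrightarrow> u \<in> span B \<Longrightarrow> u \<bullet> z = 0"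
  using orthogonal_to_span[of u B z] by (auto simp: orthogonal_def inner_commute)

lemma trace_via:
  assumes f: "finite B" and h: "\<And>x. T *v x = T *v (prj B *v x)"
  shows "trace T = (\<Sum>b\<in>B. b \<bullet> (T *v b))"
proof -
  have "T = T ** prj B" unfolding matrix_eq using h by (simp add: matrix_vector_mul_assoc)
  hence "trace T = trace (T ** prj B)" by simp
  also have "\<dots> = (\<Sum>i\<in>UNIV. \<Sum>j\<in>UNIV. \<Sum>b\<in>B. T$i$j * b$j * b$i)"
    by (simp add: trace_def matrix_matrix_mult_def prj_def sum_distrib_left mult_ac)
  also have "\<dots> = (\<Sum>i\<in>UNIV. \<Sum>b\<in>B. \<Sum>j\<in>UNIV. T$i$j * b$j * b$i)"
    by (intro sum.cong refl) (rule sum.swap)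
  also have "\<dots> = (\<Sum>b\<in>B. \<Sum>i\<in>UNIV. \<Sum>j\<in>UNIV. T$i$j * b$j * b$i)"
    by (rule sum.swap)
  also have "\<dots> = (\<Sum>b\<in>B. b \<bullet> (T *v b))"
    by (simp add: inner_vec_def matrix_vector_mult_def sum_distrib_left sum_distrib_right mult_ac)
  finally show ?thesis .
qed

lemma upper:
  fixes T X :: "real^'n^'n"
  assumes pT: "psd T" and pI: "psd (mat 1 - T)" and pX: "psd (X - T)" and sX: "sym_mat X"
  shows "trace T \<le> real (rank X)"
proof -
  define U where "U = range (\<lambda>x. X *v x)"
  have sU: "subspace U" unfolding U_def
    by (metis image_subset_iff matrix_vector_mul_linear linear_subspace_image subspace_UNIV)
  obtain B where BU: "B \<subseteq> U" and po: "pairwise orthogonal B" and n: "\<And>x. x \<in> B \<Longrightarrow> norm x = 1"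
    and ind: "independent B" and cB: "card B = dim U" and spB: "span B = U"
    using orthonormal_basis_subspace[OF sU] by blast
  have f: "finite B" using ind by (simp add: independent_imp_finite)
  have h: "T *v x = T *v (prj B *v x)" for x
  proof -
    define z where "z = x - prj B *v x"
    have zb: "b \<bullet> z = 0" if "b \<in> B" for b using prj_orth[OF f po n that] z_def by simp
    have zU: "u \<bullet> z = 0" if "u \<in> U" for u using orth_span[OF zb] that spB by blast
    have "(X *v (X *v z)) \<bullet> z = 0" using zU U_def by blast
    hence "(X *v z) \<bullet> (X *v z) = 0" using sym_inner[OF sX, of "X *v z" z] by (simp add: inner_commute)
    hence Xz: "X *v z = 0" by simp
    have "z \<bullet> (T *v z) \<le> z \<bullet> (X *v z)" by (rule psd_form[OF pX])
    moreover have "0 \<le> z \<bullet> (T *v z)" using pT by (simp add: psd_def)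
    ultimately have "z \<bullet> (T *v z) = 0" using Xz by simp
    hence "T *v z = 0" by (rule psd_zero[OF pT])
    thus ?thesis by (simp add: z_def matrix_vector_mult_diff_distrib)
  qed
  have "trace T = (\<Sum>b\<in>B. b \<bullet> (T *v b))" by (rule trace_via[OF f h])
  also have "\<dots> \<le> (\<Sum>b\<in>B. 1)"
  proof (rule sum_mono)
    fix b assume "b \<in> B"
    have "b \<bullet> (T *v b) \<le> b \<bullet> (mat 1 *v b)" by (rule psd_form[OF pI])
    thus "b \<bullet> (T *v b) \<le> 1" using n[OF \<open>b\<in>B\<close>] by (simp add: norm_eq_1)
  qed
  also have "\<dots> = real (rank X)" using cB by (simp add: rank_dim_range U_def)
  finally show ?thesis .
qed

lemma posc:
  fixes P :: "real^'n^'n"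
  assumes pP: "psd P"
  shows "\<exists>c>0. \<forall>y\<in>range (\<lambda>x. P *v x). c * (y \<bullet> y) \<le> y \<bullet> (P *v y)"
proof -
  define U where "U = range (\<lambda>x. P *v x)"
  have sU: "subspace U" unfolding U_def
    by (metis image_subset_iff matrix_vector_mul_linear linear_subspace_image subspace_UNIV)
  have sP: "sym_mat P" using pP by (simp add: psd_def)
  define K where "K = U \<inter> sphere 0 1"
  have cK: "compact K" unfolding K_def
    by (intro closed_Int_compact closed_subspace sU compact_sphere)
  show ?thesis
  proof (cases "K = {}")
    case True
    have "y = 0" if "y \<in> U" for y
    proof (rule ccontr)
      assume "y \<noteq> 0"
      hence "(1 / norm y) *\<^sub>R y \<in> K" using that sU by (simp add: K_def subspace_scale)
      thus False using True by simp
    qed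
    thus ?thesis unfolding U_def[symmetric] by (intro exI[of _ 1]) force
  next
    case False
    have "continuous_on K (\<lambda>y. y \<bullet> (P *v y))"
      by (intro continuous_intros linear_continuous_on matrix_vector_mul_bounded_linear
           continuous_on_compose2[OF matrix_vector_mult_linear_continuous_on[of UNIV]]) auto
    then obtain y0 where y0: "y0 \<in> K" and mn: "\<And>y. y \<in> K \<Longrightarrow> y0 \<bullet> (P *v y0) \<le> y \<bullet> (P *v y)"
      using continuous_attains_inf[OF cK False] by blast
    define c where "c = y0 \<bullet> (P *v y0)"
    have c0: "c > 0"
    proof (rule ccontr)
      assume "\<not> c > 0"
      moreover have "c \<ge> 0" using pP by (simp add: psd_def c_def)
      ultimately have "c = 0" by simp
      hence Py: "P *v y0 = 0" using psd_zero[OF pP] c_def by simp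
      obtain w where w: "y0 = P *v w" using y0 by (auto simp: K_def U_def)
      have "y0 \<bullet> y0 = (P *v y0) \<bullet> w" using sym_inner[OF sP, of y0 w] w by simp
      hence "y0 = 0" using Py by simp
      thus False using y0 by (simp add: K_def)
    qed
    have "c * (y \<bullet> y) \<le> y \<bullet> (P *v y)" if yU: "y \<in> U" for y
    proof (cases "y = 0")
      case True thus ?thesis by simp
    next
      case False
      define u where "u = (1 / norm y) *\<^sub>R y"
      have "u \<in> K" using yU sU False by (simp add: K_def u_def subspace_scale)
      hence "c \<le> u \<bullet> (P *v u)" using mn c_def by blast
      also have "u \<bullet> (P *v u) = (y \<bullet> (P *v y)) / (norm y)^2"
        by (simp add: u_def matrix_vector_mult_scaleR power2_eq_square)
      finally have "c * (norm y)^2 \<le> y \<bullet> (P *v y)" using False by (simp add: field_simps)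
      thus ?thesis by (simp add: power2_norm_eq_inner)
    qed
    thus ?thesis using c0 unfolding U_def by blast
  qed
qed

lemma lower:
  fixes P :: "real^'n^'n"
  assumes pP: "psd P"
  shows "\<exists>t0>0. \<exists>Q. sym_mat Q \<and> psd Q \<and> psd (mat 1 - Q) \<and> trace Q = real (rank P)
           \<and> (\<forall>t\<ge>t0. psd (t *\<^sub>R P - Q))"
proof -
  define U where "U = range (\<lambda>x. P *v x)"
  have sU: "subspace U" unfolding U_def
    by (metis image_subset_iff matrix_vector_mul_linear linear_subspace_image subspace_UNIV)
  have sP: "sym_mat P" using pP by (simp add: psd_def)
  obtain c where c0: "c > 0" and cP: "\<And>y. y \<in> U \<Longrightarrow> c * (y \<bullet> y) \<le> y \<bullet> (P *v y)"
    using posc[OF pP] unfolding U_def by blast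
  obtain B where BU: "B \<subseteq> U" and po: "pairwise orthogonal B" and n: "\<And>x. x \<in> B \<Longrightarrow> norm x = 1"
    and ind: "independent B" and cB: "card B = dim U" and spB: "span B = U"
    using orthonormal_basis_subspace[OF sU] by blast
  have f: "finite B" using ind by (simp add: independent_imp_finite)
  define Q where "Q = prj B"
  have sQ: "sym_mat Q" by (simp add: Q_def prj_sym)
  have dec: "Q *v x \<in> U \<and> (\<forall>u\<in>U. u \<bullet> (x - Q *v x) = 0)" for x
  proof -
    have zb: "b \<bullet> (x - Q *v x) = 0" if "b \<in> B" for b using prj_orth[OF f po n that] Q_def by simp
    show ?thesis using orth_span[OF zb] spB prj_span[OF f, of x] Q_def by blast
  qed
  have xQx: "x \<bullet> (Q *v x) = (Q *v x) \<bullet> (Q *v x)" for x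
  proof -
    have "(Q *v x) \<bullet> (x - Q *v x) = 0" using dec[of x] by blast
    thus ?thesis by (simp add: inner_diff_right inner_commute)
  qed
  have "psd Q" unfolding psd_def using sQ xQx by simp
  moreover have "psd (mat 1 - Q)"
    unfolding psd_def
  proof (intro conjI allI)
    show "sym_mat (mat 1 - Q)" by (intro sym_diff sym_one sQ)
    fix x :: "real^'n"
    define y where "y = Q *v x"
    have "(x - y) \<bullet> y = 0" using dec[of x] y_def by (simp add: inner_commute)
    hence "x \<bullet> x = y \<bullet> y + (x - y) \<bullet> (x - y)"
      by (simp add: inner_diff_left inner_diff_right inner_commute)
    hence "y \<bullet> y \<le> x \<bullet> x" by simp
    thus "0 \<le> x \<bullet> ((mat 1 - Q) *v x)" using xQx[of x] y_def
      by (simp add: matrix_vector_mult_diff_rdistrib inner_diff_right)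
  qed
  moreover have "trace Q = real (rank P)"
    using prj_trace[OF f n] cB by (simp add: Q_def rank_dim_range U_def)
  moreover have "psd (t *\<^sub>R P - Q)" if t: "t \<ge> 1 / c" for t
    unfolding psd_def
  proof (intro conjI allI)
    show "sym_mat (t *\<^sub>R P - Q)" by (intro sym_diff sym_scale sP sQ)
    fix x :: "real^'n"
    define y where "y = Q *v x"
    define z where "z = x - y"
    have yU: "y \<in> U" and zU: "\<And>u. u \<in> U \<Longrightarrow> u \<bullet> z = 0" using dec[of x] y_def z_def by auto
    have "(P *v (P *v z)) \<bullet> z = 0" using zU U_def by blast
    hence "(P *v z) \<bullet> (P *v z) = 0" using sym_inner[OF sP, of "P *v z" z] by (simp add: inner_commute)
    hence Pz: "P *v z = 0" by simp
    have "z \<bullet> (P *v y) = 0" using sym_inner[OF sP, of z y] Pz by simp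
    have xyz: "x = y + z" by (simp add: z_def)
    hence "P *v x = P *v y" using Pz by (simp add: matrix_vector_right_distrib)
    hence xPx: "x \<bullet> (P *v x) = y \<bullet> (P *v y)" using \<open>z \<bullet> (P *v y) = 0\<close> xyz
      by (simp add: inner_add_left)
    have yy: "y \<bullet> y \<ge> 0" by simp
    have "y \<bullet> y \<le> (t * c) * (y \<bullet> y)"
      using mult_right_mono[OF _ yy, of 1 "t*c"] t c0 by (simp add: field_simps)
    also have "\<dots> = t * (c * (y \<bullet> y))" by simp
    also have "\<dots> \<le> t * (y \<bullet> (P *v y))"
      using cP[OF yU] t c0 by (intro mult_left_mono) (auto intro: order.trans[rotated] simp: less_imp_le)
    finally have "y \<bullet> y \<le> t * (x \<bullet> (P *v x))" using xPx by simp
    moreover have tP: "(t *\<^sub>R P) *v x = t *\<^sub>R (P *v x)"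
      by (simp add: vec_eq_iff matrix_vector_mult_def sum_distrib_left mult.assoc)
    ultimately show "0 \<le> x \<bullet> ((t *\<^sub>R P - Q) *v x)" using xQx[of x] y_def
      by (simp add: matrix_vector_mult_diff_rdistrib inner_diff_right tP)
  qed
  ultimately show ?thesis using sQ c0 by (intro exI[of _ "1/c"]) auto
qed

theorem lemma7:
  fixes N :: nat and W :: "nat \<Rightarrow> real^'k^'d" and V :: "(real^'d^'d) set"
    and X :: "real^'d^'d" and Xs Ts :: "nat \<Rightarrow> real^'k^'k"
  assumes "subspace V"
    and "\<forall>A\<in>V. sym_mat A"
    and "sdp_optimal N W V X Xs Ts"
  shows "\<forall>Xs'. (\<forall>i<N. psd (Xs' i)) \<and> cong_sum N W Xs' \<in> V \<longrightarrow>
           (\<Sum>i<N. rank (Xs' i)) \<le> (\<Sum>i<N. rank (Xs i))"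
proof (intro allI impI, elim conjE)
  fix Xs' :: "nat \<Rightarrow> real^'k^'k"
  assume pX': "\<forall>i<N. psd (Xs' i)" and inV: "cong_sum N W Xs' \<in> V"
  have "\<forall>i. \<exists>p. i < N \<longrightarrow> (fst p > (0::real) \<and> sym_mat (snd p) \<and> psd (snd p) \<and> psd (mat 1 - snd p)
      \<and> trace (snd p) = real (rank (Xs' i)) \<and> (\<forall>t\<ge>fst p. psd (t *\<^sub>R Xs' i - snd p)))"
  proof
    fix i show "\<exists>p. i < N \<longrightarrow> (fst p > (0::real) \<and> sym_mat (snd p) \<and> psd (snd p) \<and> psd (mat 1 - snd p)
      \<and> trace (snd p) = real (rank (Xs' i)) \<and> (\<forall>t\<ge>fst p. psd (t *\<^sub>R Xs' i - snd p)))"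
    proof (cases "i < N")
      case True
      then obtain t0 Q where "t0 > 0" "sym_mat Q \<and> psd Q \<and> psd (mat 1 - Q) \<and> trace Q = real (rank (Xs' i))
           \<and> (\<forall>t\<ge>t0. psd (t *\<^sub>R Xs' i - Q))" using lower[of "Xs' i"] pX' by blast
      thus ?thesis by (intro exI[of _ "(t0, Q)"]) auto
    qed simp
  qed
  then obtain p where p: "\<And>i. i < N \<Longrightarrow> (fst (p i) > (0::real) \<and> sym_mat (snd (p i)) \<and> psd (snd (p i))
      \<and> psd (mat 1 - snd (p i))
      \<and> trace (snd (p i)) = real (rank (Xs' i)) \<and> (\<forall>t\<ge>fst (p i). psd (t *\<^sub>R Xs' i - snd (p i))))"
    by metis
  define t where "t = 1 + (\<Sum>i<N. fst (p i))"
  have tge: "t \<ge> fst (p i)" if "i < N" for i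
  proof -
    have "fst (p i) \<le> (\<Sum>i<N. fst (p i))"
      using that p by (intro member_le_sum) (auto intro: less_imp_le)
    thus ?thesis by (simp add: t_def)
  qed
  define Xs'' where "Xs'' = (\<lambda>i. t *\<^sub>R Xs' i)"
  define Q where "Q = (\<lambda>i. snd (p i))"
  have cs: "cong_sum N W Xs'' = t *\<^sub>R cong_sum N W Xs'"
    by (simp add: cong_sum_def Xs''_def scaleR_sum_right matrix_scalar_ac scalar_matrix_assoc)
  have "cong_sum N W Xs'' \<in> V" using cs inV assms(1) by (simp add: subspace_scale)
  hence feas: "sdp_feasible N W V (cong_sum N W Xs'') Xs'' Q"
    unfolding sdp_feasible_def loewner_ge_def using assms(2) p tge pX'
    by (auto simp: Xs''_def Q_def psd_def intro: sym_scale)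
  have "sdp_objective N Q \<le> sdp_objective N Ts"
    using assms(3) feas unfolding sdp_optimal_def by blast
  moreover have "sdp_objective N Q = (\<Sum>i<N. real (rank (Xs' i)))"
    unfolding sdp_objective_def Q_def using p by (intro sum.cong) auto
  moreover have "sdp_objective N Ts \<le> (\<Sum>i<N. real (rank (Xs i)))"
    unfolding sdp_objective_def
  proof (rule sum_mono)
    fix i assume "i \<in> {..<N}"
    hence i: "i < N" by simp
    have f: "sdp_feasible N W V X Xs Ts" using assms(3) by (simp add: sdp_optimal_def)
    show "trace (Ts i) \<le> real (rank (Xs i))"
      using f i unfolding sdp_feasible_def loewner_ge_def
      by (intro upper) auto
  qed
  ultimately have "real (\<Sum>i<N. rank (Xs' i)) \<le> real (\<Sum>i<N. rank (Xs i))" by simp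
  thus "(\<Sum>i<N. rank (Xs' i)) \<le> (\<Sum>i<N. rank (Xs i))" by linarith
qed

end
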